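(* Let each $f_i$ be $L$-smooth and convex. Let $\{h^i\}_{i\in[n]}$ be such that $\frac{1}{n}\sum_{i=1}^{n}\mathbb{E}\left[\|h^i-\nabla f_i(x^\star)\|^2\right]\leq \alpha$. Then the iterates of EC-Approximate satisfy \[ E_{t+1} \leq \left( 1-\frac{\delta }{2}\right) E_t + \frac{8L}{\delta }F_t + \frac{4\alpha}{\delta } + \sigma^2. \]
   Context: Setting: distributed optimization $f^\star=\min_{x\in\mathbb{R}^d} f(x)$, $f(x)=\frac1n\sum_{i=1}^n f_i(x)$, with minimizer $x^\star$. Each client $i$ has a stochastic gradient oracle $g^i(x)$ with $\mathbb{E}[g^i(x)]=\nabla f_i(x)$ and $\mathbb{E}\|g^i(x)-\nabla f_i(x)\|^2\le\sigma^2$. $\mathcal{C}_\delta$ is a (possibly randomized) contractive compressor: $\mathbb{E}\|\mathcal{C}_\delta(x)-x\|^2\le(1-\delta)\|x\|^2$ for all $x$, with $0<\delta\le1$. EC-Approximate (error compensation with approximate bias correction): given fixed vectors $h^i$ and $h=\frac1n\sum_i h^i$, start from $x_0$, $e_0^i=0$; at each iteration $t$, client $i$ computes $g_t^i=g^i(x_t)$, $\hat\Delta_t^i=\mathcal{C}_\delta(e_t^i+g_t^i-h^i)$, $e_{t+1}^i=e_t^i+g_t^i-h^i-\hat\Delta_t^i$, and sends $\hat\Delta_t^i$; the server updates $x_{t+1}=x_t-\gamma h-\frac{\gamma}{n}\sum_{i=1}^n\hat\Delta_t^i$ with stepsize $\gamma$. Notation: $F_t=\mathbb{E}[f(x_t)]-f^\star$,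 $E_t=\frac1n\sum_{i=1}^n\mathbb{E}\|e_t^i\|^2$. *)

theory Defs
  imports "HOL-Probability.Probability"
begin

text \<open>Clients are indexed 0..n-1.  omega (t,i) = (s, q): s is the noise of the stochastic
  gradient oracle of client i at iteration t, q the internal randomness of the compressor
  used by client i at iteration t.  The state is (x_t, (e_t^i)_i).\<close>

primrec ec_iter ::
  "nat \<Rightarrow> (nat \<Rightarrow> 'a::euclidean_space \<Rightarrow> 's \<Rightarrow> 'a) \<Rightarrow> ('a \<Rightarrow> 'q \<Rightarrow> 'a) \<Rightarrow> (nat \<Rightarrow> 'a)
    \<Rightarrow> real \<Rightarrow> 'a \<Rightarrow> (nat \<times> nat \<Rightarrow> 's \<times> 'q) \<Rightarrow> nat \<Rightarrow> 'a \<times> (nat \<Rightarrow> 'a)"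
where
  "ec_iter n g C h \<gamma> x0 \<omega> 0 = (x0, \<lambda>i. 0)"
| "ec_iter n g C h \<gamma> x0 \<omega> (Suc t) =
     (let xt = fst (ec_iter n g C h \<gamma> x0 \<omega> t);
          et = snd (ec_iter n g C h \<gamma> x0 \<omega> t);
          hbar = (1 / real n) *\<^sub>R (\<Sum>i<n. h i);
          v = (\<lambda>i. et i + g i xt (fst (\<omega> (t, i))) - h i);
          D = (\<lambda>i. C (v i) (snd (\<omega> (t, i))))
      in (xt - \<gamma> *\<^sub>R hbar - (\<gamma> / real n) *\<^sub>R (\<Sum>i<n. D i), \<lambda>i. v i - D i))"

definition ec_space :: "(nat \<Rightarrow> 's measure) \<Rightarrow> 'q measure \<Rightarrow> (nat \<times> nat \<Rightarrow> 's \<times> 'q) measure" where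
  "ec_space S Q = PiM UNIV (\<lambda>(t, i). S i \<Otimes>\<^sub>M Q)"

definition ec_E :: "nat \<Rightarrow> (nat \<Rightarrow> 's measure) \<Rightarrow> 'q measure \<Rightarrow>
    (nat \<Rightarrow> 'a::euclidean_space \<Rightarrow> 's \<Rightarrow> 'a) \<Rightarrow> ('a \<Rightarrow> 'q \<Rightarrow> 'a) \<Rightarrow> (nat \<Rightarrow> 'a)
    \<Rightarrow> real \<Rightarrow> 'a \<Rightarrow> nat \<Rightarrow> ennreal" where
  "ec_E n S Q g C h \<gamma> x0 t =
     ennreal (1 / real n) *
     (\<Sum>i<n. \<integral>\<^sup>+ \<omega>. ennreal ((norm (snd (ec_iter n g C h \<gamma> x0 \<omega> t) i))\<^sup>2) \<partial>ec_space S Q)"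

text \<open>F_t = E[f(x_t)] - f^star (f - f^star is nonnegative, so this is the integral of it).\<close>
definition ec_F :: "nat \<Rightarrow> (nat \<Rightarrow> 's measure) \<Rightarrow> 'q measure \<Rightarrow>
    (nat \<Rightarrow> 'a::euclidean_space \<Rightarrow> 's \<Rightarrow> 'a) \<Rightarrow> ('a \<Rightarrow> 'q \<Rightarrow> 'a) \<Rightarrow> (nat \<Rightarrow> 'a)
    \<Rightarrow> real \<Rightarrow> 'a \<Rightarrow> ('a \<Rightarrow> real) \<Rightarrow> real \<Rightarrow> nat \<Rightarrow> ennreal" where
  "ec_F n S Q g C h \<gamma> x0 f fstar t =
     (\<integral>\<^sup>+ \<omega>. ennreal (f (fst (ec_iter n g C h \<gamma> x0 \<omega> t)) - fstar) \<partial>ec_space S Q)"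

end

theory Submission
  imports Defs
begin


lemma line_deriv:
  fixes f :: "'a::euclidean_space \<Rightarrow> real"
  assumes "\<And>x. (f has_derivative (\<lambda>y. G x \<bullet> y)) (at x)"
  shows "((\<lambda>s. f (a + s *\<^sub>R d)) has_real_derivative (G (a + s *\<^sub>R d) \<bullet> d)) (at s)"
proof -
  have "((\<lambda>s. a + s *\<^sub>R d) has_derivative (\<lambda>u. u *\<^sub>R d)) (at s)"
    by (auto intro!: derivative_eq_intros)
  from has_derivative_compose[OF this assms]
  have "((\<lambda>s. f (a + s *\<^sub>R d)) has_derivative (\<lambda>u. G (a + s *\<^sub>R d) \<bullet> (u *\<^sub>R d))) (at s)" .
  moreover have "(\<lambda>u. G (a + s *\<^sub>R d) \<bullet> (u *\<^sub>R d)) = (*) (G (a + s *\<^sub>R d) \<bullet> d)"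
    by (auto simp: fun_eq_iff)
  ultimately show ?thesis unfolding has_field_derivative_def by simp
qed

lemma tangent:
  fixes f :: "'a::euclidean_space \<Rightarrow> real"
  assumes d: "\<And>x. (f has_derivative (\<lambda>y. G x \<bullet> y)) (at x)" and c: "convex_on UNIV f"
  shows "f w \<ge> f x + G x \<bullet> (w - x)"
proof -
  let ?p = "\<lambda>s. f (x + s *\<^sub>R (w - x))"
  have cv: "convex_on UNIV ?p"
  proof (rule convex_onI)
    fix t u v :: real assume t: "0 < t" "t < 1"
    have "x + ((1 - t) * u + t * v) *\<^sub>R (w - x) = (1 - t) *\<^sub>R (x + u *\<^sub>R (w - x)) + t *\<^sub>R (x + v *\<^sub>R (w - x))"
      by (simp add: algebra_simps)
    then show "?p ((1 - t) *\<^sub>R u + t *\<^sub>R v) \<le> (1 - t) * ?p u + t * ?p v"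
      using convex_onD[OF c, of t] t by simp
  qed simp
  have "?p 1 - ?p 0 \<ge> (G (x + 0 *\<^sub>R (w - x)) \<bullet> (w - x)) * (1 - 0)"
    by (rule convex_on_imp_above_tangent[OF cv]) (use line_deriv[OF d, where a=x and s=0 and d="w - x"] in \<open>auto intro: has_field_derivative_at_within\<close>)
  then show ?thesis by simp
qed

lemma descent:
  fixes f :: "'a::euclidean_space \<Rightarrow> real"
  assumes d: "\<And>x. (f has_derivative (\<lambda>y. G x \<bullet> y)) (at x)"
    and sm: "\<And>x y. norm (G x - G y) \<le> L * norm (x - y)"
  shows "f z \<le> f y + G y \<bullet> (z - y) + L / 2 * (norm (z - y))\<^sup>2"
proof -
  let ?d = "z - y"
  let ?c = "\<lambda>s. f (y + s *\<^sub>R ?d) - s * (G y \<bullet> ?d) - L / 2 * s\<^sup>2 * (norm ?d)\<^sup>2"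
  have key: "\<exists>D. (?c has_real_derivative D) (at s) \<and> D \<le> 0" if s: "0 \<le> s" "s \<le> 1" for s
  proof -
    have F: "((\<lambda>s. f (y + s *\<^sub>R ?d)) has_real_derivative (G (y + s *\<^sub>R ?d) \<bullet> ?d)) (at s)"
      by (rule line_deriv[OF d])
    have D: "(?c has_real_derivative (G (y + s *\<^sub>R ?d) \<bullet> ?d - G y \<bullet> ?d - L / 2 * (2 * s) * (norm ?d)\<^sup>2)) (at s)"
      by (intro DERIV_diff F DERIV_cmult DERIV_mult DERIV_ident DERIV_const derivative_eq_intros) auto
    have "G (y + s *\<^sub>R ?d) \<bullet> ?d - G y \<bullet> ?d = (G (y + s *\<^sub>R ?d) - G y) \<bullet> ?d"
      by (simp add: inner_diff_left)
    also have "\<dots> \<le> norm (G (y + s *\<^sub>R ?d) - G y) * norm ?d"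
      by (rule norm_cauchy_schwarz)
    also have "\<dots> \<le> (L * norm (s *\<^sub>R ?d)) * norm ?d"
      using sm[of "y + s *\<^sub>R ?d" y] by (intro mult_right_mono) auto
    also have "\<dots> = L * s * (norm ?d)\<^sup>2" using s by (simp add: power2_eq_square)
    finally show "\<exists>D. (?c has_real_derivative D) (at s) \<and> D \<le> 0"
      using D by (intro exI[of _ "G (y + s *\<^sub>R ?d) \<bullet> ?d - G y \<bullet> ?d - L / 2 * (2 * s) * (norm ?d)\<^sup>2"]) auto
  qed
  have "?c 0 \<ge> ?c 1" by (rule DERIV_nonpos_imp_nonincreasing[of 0 1 ?c]) (use key in auto)
  then show ?thesis by (simp add: algebra_simps)
qed

lemma cocoercive:
  fixes f :: "'a::euclidean_space \<Rightarrow> real"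
  assumes d: "\<And>x. (f has_derivative (\<lambda>y. G x \<bullet> y)) (at x)"
    and sm: "\<And>x y. norm (G x - G y) \<le> L * norm (x - y)"
    and c: "convex_on UNIV f" and L: "L > 0"
  shows "f y \<ge> f x + G x \<bullet> (y - x) + 1 / (2 * L) * (norm (G y - G x))\<^sup>2"
proof -
  define u where "u = G y - G x"
  define w where "w = y - (1 / L) *\<^sub>R u"
  have 1: "f w \<ge> f x + G x \<bullet> (w - x)" by (rule tangent[OF d c])
  have 2: "f w \<le> f y + G y \<bullet> (w - y) + L / 2 * (norm (w - y))\<^sup>2" by (rule descent[OF d sm])
  have "w - x = (y - x) - (1 / L) *\<^sub>R u" "w - y = - ((1 / L) *\<^sub>R u)" by (simp_all add: w_def)
  then have e: "G x \<bullet> (w - x) = G x \<bullet> (y - x) - (1/L) * (G x \<bullet> u)"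
     "G y \<bullet> (w - y) = - (1/L) * (G y \<bullet> u)" "(norm (w - y))\<^sup>2 = (1/L)\<^sup>2 * (norm u)\<^sup>2"
    using L by (simp_all add: inner_diff_right power_mult_distrib power_divide)
  have "G y \<bullet> u - G x \<bullet> u = (norm u)\<^sup>2" by (simp add: u_def power2_norm_eq_inner inner_diff_left)
  then have "f x + G x \<bullet> (y - x) \<le> f y - (1/L) * (norm u)\<^sup>2 + L / 2 * ((1/L)\<^sup>2 * (norm u)\<^sup>2)"
    using 1 2 e by (simp add: algebra_simps)
  also have "L / 2 * ((1/L)\<^sup>2 * (norm u)\<^sup>2) = 1 / (2 * L) * (norm u)\<^sup>2" using L by (simp add: power2_eq_square field_simps)
  finally show ?thesis using L by (simp add: u_def field_simps)
qed



lemma grad_sum_zero: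
  fixes f :: "nat \<Rightarrow> 'a::euclidean_space \<Rightarrow> real"
  assumes n: "n \<ge> 1"
    and grad: "\<And>i x. i < n \<Longrightarrow> (f i has_derivative (\<lambda>y. G i x \<bullet> y)) (at x)"
    and minimizer: "\<And>x. (1 / real n) * (\<Sum>i<n. f i xstar) \<le> (1 / real n) * (\<Sum>i<n. f i x)"
  shows "(\<Sum>i<n. G i xstar) = 0"
proof -
  define d where "d = (\<Sum>i<n. G i xstar)"
  let ?p = "\<lambda>s. (1 / real n) * (\<Sum>i<n. f i (xstar + s *\<^sub>R (- d)))"
  have D: "(?p has_real_derivative (1 / real n) * (\<Sum>i<n. G i (xstar + 0 *\<^sub>R (- d)) \<bullet> (- d))) (at 0)"
    by (intro DERIV_cmult DERIV_sum line_deriv grad) auto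
  have "(1 / real n) * (\<Sum>i<n. G i (xstar + 0 *\<^sub>R (- d)) \<bullet> (- d)) = 0"
    by (rule DERIV_local_min[OF D, of 1]) (use minimizer in auto)
  then have "(1 / real n) * (- (d \<bullet> d)) = 0"
    by (simp add: inner_sum_left sum_negf d_def)
  then show ?thesis using n by (simp add: d_def)
qed

lemma L_nonneg:
  fixes G :: "'a::euclidean_space \<Rightarrow> 'a"
  assumes "\<And>x y. norm (G x - G y) \<le> L * norm (x - y)"
  shows "L \<ge> 0"
proof -
  obtain b :: 'a where b: "b \<in> Basis" using nonempty_Basis by blast
  have "0 \<le> L * norm (0 - b)" using assms[of 0 b] norm_ge_zero order_trans by blast
  then show ?thesis using b by (simp add: zero_le_mult_iff)
qed

lemma grad_var_bound:
  fixes f :: "nat \<Rightarrow> 'a::euclidean_space \<Rightarrow> real"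
  assumes n: "n \<ge> 1"
    and grad: "\<And>i x. i < n \<Longrightarrow> (f i has_derivative (\<lambda>y. G i x \<bullet> y)) (at x)"
    and smooth: "\<And>i x y. i < n \<Longrightarrow> norm (G i x - G i y) \<le> L * norm (x - y)"
    and convex: "\<And>i. i < n \<Longrightarrow> convex_on UNIV (f i)"
    and minimizer: "\<And>x. (1 / real n) * (\<Sum>i<n. f i xstar) \<le> (1 / real n) * (\<Sum>i<n. f i x)"
  shows "(1 / real n) * (\<Sum>i<n. (norm (G i x - G i xstar))\<^sup>2)
         \<le> 2 * L * ((1 / real n) * (\<Sum>i<n. f i x) - (1 / real n) * (\<Sum>i<n. f i xstar))"
proof -
  have L0: "L \<ge> 0" using L_nonneg[of "G 0" L] smooth[of 0] n by auto
  show ?thesis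
  proof (cases "L = 0")
    case True
    then have "\<And>i. i < n \<Longrightarrow> G i x - G i xstar = 0"
      using smooth by (metis mult_zero_left norm_le_zero_iff)
    then show ?thesis using True by simp
  next
    case False
    then have Lp: "L > 0" using L0 by simp
    have c: "(norm (G i x - G i xstar))\<^sup>2 \<le> 2 * L * (f i x - f i xstar - G i xstar \<bullet> (x - xstar))"
      if i: "i < n" for i
      using cocoercive[OF grad[OF i] smooth[OF i] convex[OF i] Lp, of xstar x] Lp
      by (simp add: field_simps)
    have "(\<Sum>i<n. (norm (G i x - G i xstar))\<^sup>2) \<le> (\<Sum>i<n. 2 * L * (f i x - f i xstar - G i xstar \<bullet> (x - xstar)))"
      by (intro sum_mono c) auto
    also have "\<dots> = 2 * L * ((\<Sum>i<n. f i x) - (\<Sum>i<n. f i xstar) - (\<Sum>i<n. G i xstar) \<bullet> (x - xstar))"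
      by (simp add: sum_distrib_left[symmetric] sum_subtractf inner_sum_left)
    also have "\<dots> = 2 * L * ((\<Sum>i<n. f i x) - (\<Sum>i<n. f i xstar))"
      using grad_sum_zero[OF n grad minimizer] by simp
    finally have "(\<Sum>i<n. (norm (G i x - G i xstar))\<^sup>2) \<le> 2 * L * ((\<Sum>i<n. f i x) - (\<Sum>i<n. f i xstar))" .
    then have "(1 / real n) * (\<Sum>i<n. (norm (G i x - G i xstar))\<^sup>2) \<le> (1 / real n) * (2 * L * ((\<Sum>i<n. f i x) - (\<Sum>i<n. f i xstar)))"
      by (intro mult_left_mono) auto
    then show ?thesis by (simp add: algebra_simps)
  qed
qed

lemma young_bound:
  fixes e b :: "'a::real_inner"
  assumes d: "0 < \<delta>" "\<delta> \<le> 1"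
  shows "(1 - \<delta>) * ((norm (e + b))\<^sup>2 + \<sigma>\<^sup>2) \<le> (1 - \<delta> / 2) * (norm e)\<^sup>2 + (2 / \<delta>) * (norm b)\<^sup>2 + \<sigma>\<^sup>2"
proof -
  define E where "E = norm e"
  define B where "B = norm b"
  have "(norm (e + b))\<^sup>2 = E\<^sup>2 + 2 * (e \<bullet> b) + B\<^sup>2"
    by (simp add: E_def B_def power2_norm_eq_inner inner_add_left inner_add_right inner_commute)
  also have "e \<bullet> b \<le> E * B" unfolding E_def B_def by (rule norm_cauchy_schwarz)
  then have "2 * (e \<bullet> b) \<le> (\<delta> / 2) * E\<^sup>2 + (2 / \<delta>) * B\<^sup>2"
  proof -
    have "0 \<le> (\<delta> / 2) * (E - (2 / \<delta>) * B)\<^sup>2" using d by simp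
    also have "(\<delta> / 2) * (E - (2 / \<delta>) * B)\<^sup>2 = (\<delta> / 2) * E\<^sup>2 - 2 * E * B + (2 / \<delta>) * B\<^sup>2"
      using d by (simp add: power2_eq_square field_simps)
    finally show ?thesis using \<open>e \<bullet> b \<le> E * B\<close> by linarith
  qed
  then have "E\<^sup>2 + 2 * (e \<bullet> b) + B\<^sup>2 \<le> (1 + \<delta> / 2) * E\<^sup>2 + (1 + 2 / \<delta>) * B\<^sup>2"
    by (simp add: algebra_simps)
  finally have P: "(norm (e + b))\<^sup>2 \<le> (1 + \<delta> / 2) * E\<^sup>2 + (1 + 2 / \<delta>) * B\<^sup>2" .
  have "(1 - \<delta>) * ((norm (e + b))\<^sup>2 + \<sigma>\<^sup>2) \<le> (1 - \<delta>) * ((1 + \<delta> / 2) * E\<^sup>2 + (1 + 2 / \<delta>) * B\<^sup>2 + \<sigma>\<^sup>2)"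
    using P d by (intro mult_left_mono) auto
  also have "\<dots> = (1 - \<delta>) * (1 + \<delta> / 2) * E\<^sup>2 + (1 - \<delta>) * (1 + 2 / \<delta>) * B\<^sup>2 + (1 - \<delta>) * \<sigma>\<^sup>2"
    by (simp add: algebra_simps)
  also have "\<dots> \<le> (1 - \<delta> / 2) * E\<^sup>2 + (2 / \<delta>) * B\<^sup>2 + \<sigma>\<^sup>2"
  proof -
    have "(1 - \<delta>) * (1 + \<delta> / 2) \<le> 1 - \<delta> / 2" using d by (simp add: algebra_simps)
    moreover have "(1 - \<delta>) * (1 + 2 / \<delta>) \<le> 2 / \<delta>" using d by (simp add: field_simps)
    moreover have "(1 - \<delta>) * \<sigma>\<^sup>2 \<le> \<sigma>\<^sup>2" using d by (simp add: mult_left_le_one_le)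
    ultimately show ?thesis
      by (intro add_mono mult_right_mono) auto
  qed
  finally show ?thesis by (simp add: E_def B_def)
qed

lemma norm_diff_sq_le:
  fixes a b :: "'a::real_inner"
  shows "(norm (a - b))\<^sup>2 \<le> 2 * (norm a)\<^sup>2 + 2 * (norm b)\<^sup>2"
proof -
  have "(norm (a - b))\<^sup>2 + (norm (a + b))\<^sup>2 = 2 * (norm a)\<^sup>2 + 2 * (norm b)\<^sup>2"
    by (simp add: power2_norm_eq_inner inner_add_left inner_add_right inner_diff_left inner_diff_right inner_commute)
  then show ?thesis by (smt (verit) zero_le_power2)
qed



lemma comp2:
  assumes "(\<lambda>(x, s). g x s) \<in> borel_measurable (borel \<Otimes>\<^sub>M N)"
    and "a \<in> borel_measurable M" and "b \<in> measurable M N"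
  shows "(\<lambda>\<omega>. g (a \<omega>) (b \<omega>)) \<in> borel_measurable M"
  using measurable_compose[OF measurable_Pair[OF assms(2,3)] assms(1)] by simp

lemma ec_dep:
  "(\<And>t' j. t' < t \<Longrightarrow> \<omega> (t', j) = \<omega>' (t', j)) \<Longrightarrow> ec_iter n g C h \<gamma> x0 \<omega> t = ec_iter n g C h \<gamma> x0 \<omega>' t"
proof (induction t)
  case 0
  then show ?case by simp
next
  case (Suc t)
  have "ec_iter n g C h \<gamma> x0 \<omega> t = ec_iter n g C h \<gamma> x0 \<omega>' t"
    using Suc by auto
  moreover have "\<And>i. \<omega> (t, i) = \<omega>' (t, i)" using Suc.prems by auto
  ultimately show ?case by (simp add: Let_def)
qed

lemma ec_meas:
  fixes g :: "nat \<Rightarrow> 'a::euclidean_space \<Rightarrow> 's \<Rightarrow> 'a" and C :: "'a \<Rightarrow> 'q \<Rightarrow> 'a"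
  assumes g_meas: "\<And>i. (\<lambda>(x, s). g i x s) \<in> borel_measurable (borel \<Otimes>\<^sub>M S i)"
    and C_meas: "(\<lambda>(v, q). C v q) \<in> borel_measurable (borel \<Otimes>\<^sub>M Q)"
  shows "{(t', j). t' < t} \<subseteq> J \<Longrightarrow>
    (\<lambda>\<omega>. fst (ec_iter n g C h \<gamma> x0 \<omega> t)) \<in> borel_measurable (PiM J (\<lambda>(t, i). S i \<Otimes>\<^sub>M Q)) \<and>
    (\<forall>i. (\<lambda>\<omega>. snd (ec_iter n g C h \<gamma> x0 \<omega> t) i) \<in> borel_measurable (PiM J (\<lambda>(t, i). S i \<Otimes>\<^sub>M Q)))"
proof (induction t)
  case 0
  then show ?case by simp
next
  case (Suc t)
  let ?M = "PiM J (\<lambda>(t, i). S i \<Otimes>\<^sub>M Q)"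
  have IH: "(\<lambda>\<omega>. fst (ec_iter n g C h \<gamma> x0 \<omega> t)) \<in> borel_measurable ?M"
     "\<And>i. (\<lambda>\<omega>. snd (ec_iter n g C h \<gamma> x0 \<omega> t) i) \<in> borel_measurable ?M"
  proof -
    have sub: "{(t', j). t' < t} \<subseteq> J" using Suc.prems by auto
    show "(\<lambda>\<omega>. fst (ec_iter n g C h \<gamma> x0 \<omega> t)) \<in> borel_measurable ?M" using Suc.IH[OF sub] by blast
    show "\<And>i. (\<lambda>\<omega>. snd (ec_iter n g C h \<gamma> x0 \<omega> t) i) \<in> borel_measurable ?M" using Suc.IH[OF sub] by blast
  qed
  have om: "(\<lambda>\<omega>. \<omega> (t, i)) \<in> measurable ?M (S i \<Otimes>\<^sub>M Q)" for i
    using measurable_component_singleton[of "(t, i)" J "\<lambda>(t, i). S i \<Otimes>\<^sub>M Q"] Suc.prems by auto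
  have omf: "(\<lambda>\<omega>. fst (\<omega> (t, i))) \<in> measurable ?M (S i)" for i
    using measurable_compose[OF om measurable_fst] by (simp add: comp_def)
  have oms: "(\<lambda>\<omega>. snd (\<omega> (t, i))) \<in> measurable ?M Q" for i
    using measurable_compose[OF om measurable_snd] by (simp add: comp_def)
  have v: "(\<lambda>\<omega>. snd (ec_iter n g C h \<gamma> x0 \<omega> t) i + g i (fst (ec_iter n g C h \<gamma> x0 \<omega> t)) (fst (\<omega> (t, i))) - h i)
      \<in> borel_measurable ?M" for i
    by (intro borel_measurable_add borel_measurable_diff IH comp2[OF g_meas] omf measurable_const) simp
  have D: "(\<lambda>\<omega>. C (snd (ec_iter n g C h \<gamma> x0 \<omega> t) i + g i (fst (ec_iter n g C h \<gamma> x0 \<omega> t)) (fst (\<omega> (t, i))) - h i) (snd (\<omega> (t, i))))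
      \<in> borel_measurable ?M" for i
    by (intro comp2[OF C_meas] v oms)
  show ?case
    unfolding ec_iter.simps Let_def fst_conv snd_conv
    by (intro conjI allI borel_measurable_diff[OF v D] borel_measurable_diff borel_measurable_scaleR
        borel_measurable_sum IH D measurable_const) auto
qed



lemma borel_measurable_ennreal:
  "f \<in> borel_measurable M \<Longrightarrow> (\<lambda>x. ennreal (f x)) \<in> borel_measurable M"
  by (rule measurable_compose[OF _ measurable_ennreal])

lemma bm_norm:
  "f \<in> borel_measurable M \<Longrightarrow> (\<lambda>x. norm (f x)) \<in> borel_measurable M"
  by (rule measurable_compose[OF _ borel_measurable_norm])

lemma step_bound:
  fixes u :: "'s \<Rightarrow> 'a::euclidean_space" and C :: "'a \<Rightarrow> 'q \<Rightarrow> 'a"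
  assumes N: "prob_space N" and Qp: "prob_space Q"
    and um: "u \<in> borel_measurable N"
    and C_meas: "(\<lambda>(v, q). C v q) \<in> borel_measurable (borel \<Otimes>\<^sub>M Q)"
    and int: "integrable N u" and mean: "(\<integral>s. u s \<partial>N) = m"
    and var: "(\<integral>\<^sup>+ s. ennreal ((norm (u s - m))\<^sup>2) \<partial>N) \<le> ennreal (\<sigma>\<^sup>2)"
    and delta: "0 < \<delta>" "\<delta> \<le> 1"
    and contractive: "\<And>v. (\<integral>\<^sup>+ q. ennreal ((norm (C v q - v))\<^sup>2) \<partial>Q) \<le> ennreal ((1 - \<delta>) * (norm v)\<^sup>2)"
  shows "(\<integral>\<^sup>+ z. ennreal ((norm (a + u (fst z) - C (a + u (fst z)) (snd z)))\<^sup>2) \<partial>(N \<Otimes>\<^sub>M Q))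
          \<le> ennreal ((1 - \<delta>) * ((norm (a + m))\<^sup>2 + \<sigma>\<^sup>2))"
proof -
  interpret N: prob_space N by (rule N)
  interpret Q: prob_space Q by (rule Qp)
  interpret P: pair_sigma_finite N Q
    unfolding pair_sigma_finite_def by (intro conjI prob_space_imp_sigma_finite N Qp)
  have Cm: "(\<lambda>z. C (a + u (fst z)) (snd z)) \<in> borel_measurable (N \<Otimes>\<^sub>M Q)"
    by (rule comp2[OF C_meas]) (auto intro!: borel_measurable_add measurable_compose[OF measurable_fst um])
  have Fm: "(\<lambda>z. ennreal ((norm (a + u (fst z) - C (a + u (fst z)) (snd z)))\<^sup>2)) \<in> borel_measurable (N \<Otimes>\<^sub>M Q)"
  proof -
    have "(\<lambda>z. u (fst z)) \<in> borel_measurable (N \<Otimes>\<^sub>M Q)" by (rule measurable_compose[OF measurable_fst um])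
    then show ?thesis using Cm by (intro borel_measurable_ennreal borel_measurable_power bm_norm borel_measurable_diff borel_measurable_add measurable_const) auto
  qed
  have "(\<integral>\<^sup>+ z. ennreal ((norm (a + u (fst z) - C (a + u (fst z)) (snd z)))\<^sup>2) \<partial>(N \<Otimes>\<^sub>M Q))
      = (\<integral>\<^sup>+ s. \<integral>\<^sup>+ q. ennreal ((norm (a + u s - C (a + u s) q))\<^sup>2) \<partial>Q \<partial>N)"
    using Q.nn_integral_fst[OF Fm] by simp
  also have "\<dots> \<le> (\<integral>\<^sup>+ s. ennreal (1 - \<delta>) * ennreal ((norm (a + u s))\<^sup>2) \<partial>N)"
  proof (rule nn_integral_mono)
    fix s
    show "(\<integral>\<^sup>+ q. ennreal ((norm (a + u s - C (a + u s) q))\<^sup>2) \<partial>Q) \<le> ennreal (1 - \<delta>) * ennreal ((norm (a + u s))\<^sup>2)"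
      using contractive[of "a + u s"] delta by (simp add: norm_minus_commute ennreal_mult)
  qed
  also have "\<dots> = ennreal (1 - \<delta>) * (\<integral>\<^sup>+ s. ennreal ((norm (a + u s))\<^sup>2) \<partial>N)"
    by (rule nn_integral_cmult, intro borel_measurable_ennreal borel_measurable_power bm_norm borel_measurable_add measurable_const um, auto)
  also have "(\<integral>\<^sup>+ s. ennreal ((norm (a + u s))\<^sup>2) \<partial>N) \<le> ennreal ((norm (a + m))\<^sup>2 + \<sigma>\<^sup>2)"
  proof -
    define w where "w s = u s - m" for s
    have wm: "w \<in> borel_measurable N" unfolding w_def using um by measurable
    have wint: "integrable N w" unfolding w_def using int by auto
    have w0: "(\<integral>s. w s \<partial>N) = 0" unfolding w_def using int mean by (simp add: N.prob_space)
    have w2m: "(\<lambda>s. (norm (w s))\<^sup>2) \<in> borel_measurable N" using wm by measurable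
    have fin: "(\<integral>\<^sup>+ s. ennreal (norm ((norm (w s))\<^sup>2)) \<partial>N) < \<infinity>"
      using var by (simp add: w_def) (metis ennreal_less_top le_less_trans)
    have w2int: "integrable N (\<lambda>s. (norm (w s))\<^sup>2)"
      by (rule integrableI_bounded[OF w2m fin])
    have w2le: "(\<integral>s. (norm (w s))\<^sup>2 \<partial>N) \<le> \<sigma>\<^sup>2"
    proof -
      have "ennreal (\<integral>s. (norm (w s))\<^sup>2 \<partial>N) = (\<integral>\<^sup>+ s. ennreal ((norm (w s))\<^sup>2) \<partial>N)"
        by (rule nn_integral_eq_integral[symmetric, OF w2int]) auto
      also have "\<dots> \<le> ennreal (\<sigma>\<^sup>2)" using var by (simp add: w_def)
      finally show ?thesis by simp
    qed
    have eq: "(norm (a + u s))\<^sup>2 = (norm (a + m))\<^sup>2 + 2 * ((a + m) \<bullet> w s) + (norm (w s))\<^sup>2" for s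
    proof -
      have "a + u s = (a + m) + w s" by (simp add: w_def)
      then show ?thesis
        by (simp add: power2_norm_eq_inner inner_add_left inner_add_right inner_commute)
    qed
    have iint: "integrable N (\<lambda>s. (norm (a + m))\<^sup>2 + 2 * ((a + m) \<bullet> w s) + (norm (w s))\<^sup>2)"
      using wint w2int by auto
    have "(\<integral>s. (norm (a + m))\<^sup>2 + 2 * ((a + m) \<bullet> w s) + (norm (w s))\<^sup>2 \<partial>N)
        = (norm (a + m))\<^sup>2 + 2 * ((a + m) \<bullet> (\<integral>s. w s \<partial>N)) + (\<integral>s. (norm (w s))\<^sup>2 \<partial>N)"
      using wint w2int by (simp add: N.prob_space)
    also have "\<dots> \<le> (norm (a + m))\<^sup>2 + \<sigma>\<^sup>2" using w0 w2le by simp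
    finally have I: "(\<integral>s. (norm (a + m))\<^sup>2 + 2 * ((a + m) \<bullet> w s) + (norm (w s))\<^sup>2 \<partial>N) \<le> (norm (a + m))\<^sup>2 + \<sigma>\<^sup>2" .
    have "(\<integral>\<^sup>+ s. ennreal ((norm (a + u s))\<^sup>2) \<partial>N)
        = (\<integral>\<^sup>+ s. ennreal ((norm (a + m))\<^sup>2 + 2 * ((a + m) \<bullet> w s) + (norm (w s))\<^sup>2) \<partial>N)"
      by (simp only: eq)
    also have "\<dots> = ennreal (\<integral>s. (norm (a + m))\<^sup>2 + 2 * ((a + m) \<bullet> w s) + (norm (w s))\<^sup>2 \<partial>N)"
      by (rule nn_integral_eq_integral[OF iint]) (simp add: eq[symmetric])
    also have "\<dots> \<le> ennreal ((norm (a + m))\<^sup>2 + \<sigma>\<^sup>2)" using I by (rule ennreal_leI)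
    finally show ?thesis .
  qed
  then have "ennreal (1 - \<delta>) * (\<integral>\<^sup>+ s. ennreal ((norm (a + u s))\<^sup>2) \<partial>N) \<le> ennreal (1 - \<delta>) * ennreal ((norm (a + m))\<^sup>2 + \<sigma>\<^sup>2)"
    by (rule mult_left_mono) simp
  also have "\<dots> = ennreal ((1 - \<delta>) * ((norm (a + m))\<^sup>2 + \<sigma>\<^sup>2))"
    using delta by (simp add: ennreal_mult)
  finally show ?thesis .
qed



lemma lip_cont:
  fixes G :: "'a::euclidean_space \<Rightarrow> 'a"
  assumes "\<And>x y. norm (G x - G y) \<le> L * norm (x - y)"
  shows "continuous_on UNIV G"
  by (rule lipschitz_on_continuous_on[of L]) (use L_nonneg[OF assms] assms in \<open>auto simp: lipschitz_on_def dist_norm\<close>)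

lemma upd_meas:
  fixes k :: 'i and M :: "'i \<Rightarrow> 'm measure"
  shows "(\<lambda>(z, X). X(k := z)) \<in> measurable (M k \<Otimes>\<^sub>M PiM (UNIV - {k}) M) (PiM UNIV M)"
proof -
  have eq: "(\<lambda>(z, X). X(k := z)) = (\<lambda>p j. (\<lambda>j p. if j = k then fst p else snd p j) j p)"
    by (auto simp: fun_eq_iff)
  show ?thesis unfolding eq
  proof (rule measurable_PiM_single')
    fix j :: 'i assume "j \<in> UNIV"
    show "(\<lambda>p. if j = k then fst p else snd p j) \<in> measurable (M k \<Otimes>\<^sub>M PiM (UNIV - {k}) M) (M j)"
    proof (cases "j = k")
      case True then show ?thesis by simp
    next
      case False
      then show ?thesis
        using measurable_compose[OF measurable_snd measurable_component_singleton[of j "UNIV - {k}" M]] by (simp add: comp_def)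
    qed
  next
    show "(\<lambda>p j. if j = k then fst p else snd p j) \<in> space (M k \<Otimes>\<^sub>M PiM (UNIV - {k}) M) \<rightarrow> (\<Pi>\<^sub>E j\<in>UNIV. space (M j))"
    proof (rule Pi_I)
      fix p assume "p \<in> space (M k \<Otimes>\<^sub>M PiM (UNIV - {k}) M)"
      then have "p \<in> space (M k) \<times> space (PiM (UNIV - {k}) M)" by (simp only: space_pair_measure)
      then have a: "fst p \<in> space (M k)" and b': "snd p \<in> space (PiM (UNIV - {k}) M)"
        by (simp_all add: mem_Times_iff)
      from b' have b: "snd p \<in> PiE (UNIV - {k}) (\<lambda>j. space (M j))" by (simp only: space_PiM)
      have "\<forall>j\<in>UNIV. (if j = k then fst p else snd p j) \<in> space (M j)"
        using a b unfolding PiE_iff by auto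
      then show "(\<lambda>j. if j = k then fst p else snd p j) \<in> (\<Pi>\<^sub>E j\<in>UNIV. space (M j))"
        unfolding PiE_iff by simp
    qed
  qed
qed

lemma split_coord:
  assumes P: "\<And>j. prob_space (M j)" and F: "F \<in> borel_measurable (PiM UNIV M)"
  shows "(\<integral>\<^sup>+ \<omega>. F \<omega> \<partial>PiM UNIV M) = (\<integral>\<^sup>+ X. \<integral>\<^sup>+ z. F (X(k := z)) \<partial>M k \<partial>PiM (UNIV - {k}) M)"
proof -
  have ins: "insert k (UNIV - {k}) = UNIV" by auto
  have D: "distr (M k \<Otimes>\<^sub>M PiM (UNIV - {k}) M) (PiM UNIV M) (\<lambda>(z, X). X(k := z)) = PiM UNIV M"
    using distr_pair_PiM_eq_PiM[of "UNIV - {k}" M k] P unfolding ins by auto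
  interpret PS: pair_sigma_finite "M k" "PiM (UNIV - {k}) M"
    unfolding pair_sigma_finite_def by (intro conjI prob_space_imp_sigma_finite P prob_space_PiM)
  have FT: "(\<lambda>p. F ((\<lambda>(z, X). X(k := z)) p)) \<in> borel_measurable (M k \<Otimes>\<^sub>M PiM (UNIV - {k}) M)"
    using measurable_compose[OF upd_meas F] by (simp add: comp_def)
  have "(\<integral>\<^sup>+ \<omega>. F \<omega> \<partial>PiM UNIV M) = (\<integral>\<^sup>+ \<omega>. F \<omega> \<partial>distr (M k \<Otimes>\<^sub>M PiM (UNIV - {k}) M) (PiM UNIV M) (\<lambda>(z, X). X(k := z)))"
    by (simp only: D)
  also have "\<dots> = (\<integral>\<^sup>+ p. F ((\<lambda>(z, X). X(k := z)) p) \<partial>(M k \<Otimes>\<^sub>M PiM (UNIV - {k}) M))"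
    by (rule nn_integral_distr[OF upd_meas]) (simp add: D F)
  also have "\<dots> = (\<integral>\<^sup>+ X. \<integral>\<^sup>+ z. F (X(k := z)) \<partial>M k \<partial>PiM (UNIV - {k}) M)"
    using PS.nn_integral_snd[OF FT] by simp
  finally show ?thesis .
qed



lemma pointwise:
  fixes f :: "nat \<Rightarrow> 'a::euclidean_space \<Rightarrow> real"
  assumes n_pos: "n \<ge> 1"
    and grad: "\<And>i x. i < n \<Longrightarrow> (f i has_derivative (\<lambda>y. G i x \<bullet> y)) (at x)"
    and smooth: "\<And>i x y. i < n \<Longrightarrow> norm (G i x - G i y) \<le> L * norm (x - y)"
    and convex: "\<And>i. i < n \<Longrightarrow> convex_on UNIV (f i)"
    and minimizer: "\<And>x. (1 / real n) * (\<Sum>i<n. f i xstar) \<le> (1 / real n) * (\<Sum>i<n. f i x)"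
    and delta: "0 < \<delta>" "\<delta> \<le> 1"
    and alpha: "(1 / real n) * (\<Sum>i<n. (norm (h i - G i xstar))\<^sup>2) \<le> \<alpha>"
  shows "(1 / real n) * (\<Sum>i<n. (1 - \<delta> / 2) * (norm (e i))\<^sup>2 + (2 / \<delta>) * (norm (G i x - h i))\<^sup>2 + \<sigma>\<^sup>2)
     \<le> (1 - \<delta> / 2) * ((1 / real n) * (\<Sum>i<n. (norm (e i))\<^sup>2))
       + (8 * L / \<delta>) * ((1 / real n) * (\<Sum>i<n. f i x) - (1 / real n) * (\<Sum>i<n. f i xstar))
       + 4 * \<alpha> / \<delta> + \<sigma>\<^sup>2"
proof -
  have n0: "real n > 0" using n_pos by simp
  have gv: "(1 / real n) * (\<Sum>i<n. (norm (G i x - G i xstar))\<^sup>2)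
         \<le> 2 * L * ((1 / real n) * (\<Sum>i<n. f i x) - (1 / real n) * (\<Sum>i<n. f i xstar))"
    by (rule grad_var_bound[OF n_pos grad smooth convex minimizer])
  have "(\<Sum>i<n. (norm (G i x - h i))\<^sup>2) \<le> (\<Sum>i<n. 2 * (norm (G i x - G i xstar))\<^sup>2 + 2 * (norm (h i - G i xstar))\<^sup>2)"
  proof (rule sum_mono)
    fix i
    have "G i x - h i = (G i x - G i xstar) - (h i - G i xstar)" by simp
    then show "(norm (G i x - h i))\<^sup>2 \<le> 2 * (norm (G i x - G i xstar))\<^sup>2 + 2 * (norm (h i - G i xstar))\<^sup>2"
      using norm_diff_sq_le[of "G i x - G i xstar" "h i - G i xstar"] by simp
  qed
  then have "(1 / real n) * (\<Sum>i<n. (norm (G i x - h i))\<^sup>2)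
     \<le> (1 / real n) * (\<Sum>i<n. 2 * (norm (G i x - G i xstar))\<^sup>2 + 2 * (norm (h i - G i xstar))\<^sup>2)"
    by (intro mult_left_mono) auto
  also have "\<dots> = 2 * ((1 / real n) * (\<Sum>i<n. (norm (G i x - G i xstar))\<^sup>2)) + 2 * ((1 / real n) * (\<Sum>i<n. (norm (h i - G i xstar))\<^sup>2))"
    by (simp add: sum.distrib sum_distrib_left[symmetric] algebra_simps)
  also have "\<dots> \<le> 2 * (2 * L * ((1 / real n) * (\<Sum>i<n. f i x) - (1 / real n) * (\<Sum>i<n. f i xstar))) + 2 * \<alpha>"
    using gv alpha by linarith
  finally have H: "(1 / real n) * (\<Sum>i<n. (norm (G i x - h i))\<^sup>2) \<le> 4 * L * ((1 / real n) * (\<Sum>i<n. f i x) - (1 / real n) * (\<Sum>i<n. f i xstar)) + 2 * \<alpha>"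
    by simp
  have "(1 / real n) * (\<Sum>i<n. (1 - \<delta> / 2) * (norm (e i))\<^sup>2 + (2 / \<delta>) * (norm (G i x - h i))\<^sup>2 + \<sigma>\<^sup>2)
      = (1 / real n) * ((1 - \<delta> / 2) * (\<Sum>i<n. (norm (e i))\<^sup>2) + (2 / \<delta>) * (\<Sum>i<n. (norm (G i x - h i))\<^sup>2) + real n * \<sigma>\<^sup>2)"
    by (simp add: sum.distrib sum_distrib_left)
  also have "\<dots> = (1 - \<delta> / 2) * ((1 / real n) * (\<Sum>i<n. (norm (e i))\<^sup>2)) + (2 / \<delta>) * ((1 / real n) * (\<Sum>i<n. (norm (G i x - h i))\<^sup>2)) + \<sigma>\<^sup>2"
    using n0 by (simp add: field_simps)
  also have "\<dots> \<le> (1 - \<delta> / 2) * ((1 / real n) * (\<Sum>i<n. (norm (e i))\<^sup>2)) + (2 / \<delta>) * (4 * L * ((1 / real n) * (\<Sum>i<n. f i x) - (1 / real n) * (\<Sum>i<n. f i xstar)) + 2 * \<alpha>) + \<sigma>\<^sup>2"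
    using H delta by (intro add_mono mult_left_mono order_refl) auto
  also have "\<dots> = (1 - \<delta> / 2) * ((1 / real n) * (\<Sum>i<n. (norm (e i))\<^sup>2))
       + (8 * L / \<delta>) * ((1 / real n) * (\<Sum>i<n. f i x) - (1 / real n) * (\<Sum>i<n. f i xstar))
       + 4 * \<alpha> / \<delta> + \<sigma>\<^sup>2"
    using delta by (simp add: field_simps)
  finally show ?thesis .
qed



theorem lemma13:
  fixes n :: nat
    and f :: "nat \<Rightarrow> 'a::euclidean_space \<Rightarrow> real"
    and G :: "nat \<Rightarrow> 'a \<Rightarrow> 'a"
    and g :: "nat \<Rightarrow> 'a \<Rightarrow> 's \<Rightarrow> 'a"
    and S :: "nat \<Rightarrow> 's measure"
    and C :: "'a \<Rightarrow> 'q \<Rightarrow> 'a"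
    and Q :: "'q measure"
    and h :: "nat \<Rightarrow> 'a"
    and L \<sigma> \<delta> \<alpha> \<gamma> :: real
    and x0 xstar :: 'a
  assumes n_pos: "n \<ge> 1"
    and grad: "\<And>i x. i < n \<Longrightarrow> (f i has_derivative (\<lambda>y. G i x \<bullet> y)) (at x)"
    and smooth: "\<And>i x y. i < n \<Longrightarrow> norm (G i x - G i y) \<le> L * norm (x - y)"
    and convex: "\<And>i. i < n \<Longrightarrow> convex_on UNIV (f i)"
    and minimizer: "\<And>x. (1 / real n) * (\<Sum>i<n. f i xstar) \<le> (1 / real n) * (\<Sum>i<n. f i x)"
    and S_prob: "\<And>i. prob_space (S i)"
    and g_meas: "\<And>i. (\<lambda>(x, s). g i x s) \<in> borel_measurable (borel \<Otimes>\<^sub>M S i)"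
    and unbiased: "\<And>i x. i < n \<Longrightarrow> integrable (S i) (g i x) \<and> (\<integral>s. g i x s \<partial>S i) = G i x"
    and variance: "\<And>i x. i < n \<Longrightarrow>
                     (\<integral>\<^sup>+ s. ennreal ((norm (g i x s - G i x))\<^sup>2) \<partial>S i) \<le> ennreal (\<sigma>\<^sup>2)"
    and Q_prob: "prob_space Q"
    and C_meas: "(\<lambda>(v, q). C v q) \<in> borel_measurable (borel \<Otimes>\<^sub>M Q)"
    and delta: "0 < \<delta>" "\<delta> \<le> 1"
    and contractive: "\<And>v. (\<integral>\<^sup>+ q. ennreal ((norm (C v q - v))\<^sup>2) \<partial>Q) \<le> ennreal ((1 - \<delta>) * (norm v)\<^sup>2)"
    and alpha: "(1 / real n) * (\<Sum>i<n. (norm (h i - G i xstar))\<^sup>2) \<le> \<alpha>"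
  shows "ec_E n S Q g C h \<gamma> x0 (Suc t)
           \<le> ennreal (1 - \<delta> / 2) * ec_E n S Q g C h \<gamma> x0 t
             + ennreal (8 * L / \<delta>) * ec_F n S Q g C h \<gamma> x0
                 (\<lambda>x. (1 / real n) * (\<Sum>i<n. f i x)) ((1 / real n) * (\<Sum>i<n. f i xstar)) t
             + ennreal (4 * \<alpha> / \<delta>) + ennreal (\<sigma>\<^sup>2)"
proof -
  define M where "M = (\<lambda>(t::nat, i::nat). S i \<Otimes>\<^sub>M Q)"
  have Om: "ec_space S Q = PiM UNIV M" by (simp add: ec_space_def M_def)
  have Mk: "M (t', i) = S i \<Otimes>\<^sub>M Q" for t' i by (simp add: M_def)
  have Mp: "\<And>j. prob_space (M j)"
    using S_prob Q_prob by (auto simp: M_def intro!: prob_space_pair split: prod.split)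
  interpret Om: prob_space "PiM UNIV M" using Mp by (intro prob_space_PiM) auto
  have L0: "L \<ge> 0" using L_nonneg[of "G 0" L] smooth[of 0] n_pos by auto
  have a0: "\<alpha> \<ge> 0" using alpha n_pos by (smt (verit) divide_nonneg_nonneg mult_nonneg_nonneg of_nat_0_le_iff sum_nonneg zero_le_power2)
  define X where "X \<omega> = fst (ec_iter n g C h \<gamma> x0 \<omega> t)" for \<omega>
  define E where "E \<omega> i = snd (ec_iter n g C h \<gamma> x0 \<omega> t) i" for \<omega> i
  define fb where "fb x = (1 / real n) * (\<Sum>i<n. f i x)" for x
  define fs where "fs = (1 / real n) * (\<Sum>i<n. f i xstar)"
  have Xm: "X \<in> borel_measurable (PiM J M)" if "{(t', j). t' < t} \<subseteq> J" for J
    using ec_meas[where g=g and S=S and C=C and Q=Q, OF g_meas C_meas that] unfolding M_def X_def by blast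
  have Em: "(\<lambda>\<omega>. E \<omega> i) \<in> borel_measurable (PiM J M)" if "{(t', j). t' < t} \<subseteq> J" for J i
    using ec_meas[where g=g and S=S and C=C and Q=Q, OF g_meas C_meas that] unfolding M_def E_def by blast
  have E1m: "(\<lambda>\<omega>. snd (ec_iter n g C h \<gamma> x0 \<omega> (Suc t)) i) \<in> borel_measurable (PiM UNIV M)" for i
    using ec_meas[where g=g and S=S and C=C and Q=Q, OF g_meas C_meas, of "Suc t" UNIV] unfolding M_def by blast
  have Gc: "continuous_on UNIV (G i)" if "i < n" for i by (rule lip_cont[OF smooth[OF that]])
  have fc: "continuous_on UNIV (f i)" if "i < n" for i
    using grad[OF that] by (intro continuous_at_imp_continuous_on ballI has_derivative_continuous) auto
  define P where "P i x (e::'a) = (1 - \<delta> / 2) * (norm e)\<^sup>2 + (2 / \<delta>) * (norm (G i x - h i))\<^sup>2 + \<sigma>\<^sup>2" for i x e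
  have P0: "P i x e \<ge> 0" for i x e unfolding P_def using delta by (intro add_nonneg_nonneg mult_nonneg_nonneg) auto
  have Pm: "(\<lambda>\<omega>. P i (X \<omega>) (E \<omega> i)) \<in> borel_measurable (PiM UNIV M)" if i: "i < n" for i
    unfolding P_def
    by (intro borel_measurable_add borel_measurable_times borel_measurable_power bm_norm borel_measurable_diff
        borel_measurable_continuous_on[OF Gc[OF i]] Xm Em measurable_const) auto
  have stepi: "(\<integral>\<^sup>+\<omega>. ennreal ((norm (snd (ec_iter n g C h \<gamma> x0 \<omega> (Suc t)) i))\<^sup>2) \<partial>PiM UNIV M)
      \<le> (\<integral>\<^sup>+\<omega>. ennreal (P i (X \<omega>) (E \<omega> i)) \<partial>PiM UNIV M)" if i: "i < n" for i
  proof -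
    define B where "B x (e::'a) = (1 - \<delta>) * ((norm (e + G i x - h i))\<^sup>2 + \<sigma>\<^sup>2)" for x e
    let ?k = "(t, i)"
    let ?P = "PiM (UNIV - {?k}) M"
    have sub: "{(t', j). t' < t} \<subseteq> UNIV - {?k}" by auto
    have dep: "ec_iter n g C h \<gamma> x0 (Y(?k := z)) t = ec_iter n g C h \<gamma> x0 Y t" for Y z
      by (rule ec_dep) auto
    have F1m: "(\<lambda>\<omega>. ennreal ((norm (snd (ec_iter n g C h \<gamma> x0 \<omega> (Suc t)) i))\<^sup>2)) \<in> borel_measurable (PiM UNIV M)"
      by (intro borel_measurable_ennreal borel_measurable_power bm_norm E1m)
    have F2m: "(\<lambda>\<omega>. ennreal (B (X \<omega>) (E \<omega> i))) \<in> borel_measurable (PiM UNIV M)"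
      unfolding B_def
      by (intro borel_measurable_ennreal borel_measurable_add borel_measurable_times borel_measurable_power bm_norm borel_measurable_diff
          borel_measurable_continuous_on[OF Gc[OF i]] Xm Em measurable_const) auto
    have "(\<integral>\<^sup>+\<omega>. ennreal ((norm (snd (ec_iter n g C h \<gamma> x0 \<omega> (Suc t)) i))\<^sup>2) \<partial>PiM UNIV M)
      = (\<integral>\<^sup>+Y. \<integral>\<^sup>+z. ennreal ((norm (snd (ec_iter n g C h \<gamma> x0 (Y(?k := z)) (Suc t)) i))\<^sup>2) \<partial>M ?k \<partial>?P)"
      by (rule split_coord[OF Mp F1m])
    also have "\<dots> \<le> (\<integral>\<^sup>+Y. ennreal (B (X Y) (E Y i)) \<partial>?P)"
    proof (rule nn_integral_mono)
      fix Y
      let ?a = "E Y i - h i"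
      let ?u = "g i (X Y)"
      have eq: "snd (ec_iter n g C h \<gamma> x0 (Y(?k := z)) (Suc t)) i = ?a + ?u (fst z) - C (?a + ?u (fst z)) (snd z)" for z
      proof -
        have "snd (ec_iter n g C h \<gamma> x0 (Y(?k := z)) (Suc t)) i = E Y i + ?u (fst z) - h i - C (E Y i + ?u (fst z) - h i) (snd z)"
          by (simp add: Let_def dep X_def E_def)
        also have "E Y i + ?u (fst z) - h i = ?a + ?u (fst z)" by (simp add: algebra_simps)
        finally show ?thesis .
      qed
      have um: "?u \<in> borel_measurable (S i)" by (rule comp2[OF g_meas]) auto
      have "(\<integral>\<^sup>+z. ennreal ((norm (snd (ec_iter n g C h \<gamma> x0 (Y(?k := z)) (Suc t)) i))\<^sup>2) \<partial>M ?k)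
          = (\<integral>\<^sup>+z. ennreal ((norm (?a + ?u (fst z) - C (?a + ?u (fst z)) (snd z)))\<^sup>2) \<partial>(S i \<Otimes>\<^sub>M Q))"
        by (simp only: eq Mk)
      also have "\<dots> \<le> ennreal ((1 - \<delta>) * ((norm (?a + G i (X Y)))\<^sup>2 + \<sigma>\<^sup>2))"
        by (rule step_bound[OF S_prob Q_prob um C_meas conjunct1[OF unbiased[OF i]] conjunct2[OF unbiased[OF i]]
              variance[OF i] delta contractive])
      also have "?a + G i (X Y) = E Y i + G i (X Y) - h i" by (simp add: algebra_simps)
      finally show "(\<integral>\<^sup>+z. ennreal ((norm (snd (ec_iter n g C h \<gamma> x0 (Y(?k := z)) (Suc t)) i))\<^sup>2) \<partial>M ?k)
          \<le> ennreal (B (X Y) (E Y i))" unfolding B_def .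
    qed
    also have "\<dots> = (\<integral>\<^sup>+Y. \<integral>\<^sup>+z. ennreal (B (X (Y(?k := z))) (E (Y(?k := z)) i)) \<partial>M ?k \<partial>?P)"
      by (simp add: dep X_def E_def prob_space.emeasure_space_1[OF Mp])
    also have "\<dots> = (\<integral>\<^sup>+\<omega>. ennreal (B (X \<omega>) (E \<omega> i)) \<partial>PiM UNIV M)"
      by (rule split_coord[OF Mp F2m, symmetric])
    also have "\<dots> \<le> (\<integral>\<^sup>+\<omega>. ennreal (P i (X \<omega>) (E \<omega> i)) \<partial>PiM UNIV M)"
    proof (rule nn_integral_mono)
      fix \<omega>
      have "E \<omega> i + G i (X \<omega>) - h i = E \<omega> i + (G i (X \<omega>) - h i)" by simp
      then show "ennreal (B (X \<omega>) (E \<omega> i)) \<le> ennreal (P i (X \<omega>) (E \<omega> i))"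
        using young_bound[OF delta, of "E \<omega> i" "G i (X \<omega>) - h i" \<sigma>]
        by (intro ennreal_leI) (simp add: B_def P_def add_diff_eq)
    qed
    finally show ?thesis .
  qed
  define R where "R \<omega> = (1 - \<delta> / 2) * ((1 / real n) * (\<Sum>i<n. (norm (E \<omega> i))\<^sup>2))
       + (8 * L / \<delta>) * (fb (X \<omega>) - fs) + 4 * \<alpha> / \<delta> + \<sigma>\<^sup>2" for \<omega>
  have "ec_E n S Q g C h \<gamma> x0 (Suc t)
      = ennreal (1 / real n) * (\<Sum>i<n. \<integral>\<^sup>+\<omega>. ennreal ((norm (snd (ec_iter n g C h \<gamma> x0 \<omega> (Suc t)) i))\<^sup>2) \<partial>PiM UNIV M)"
    by (simp add: ec_E_def Om)
  also have "\<dots> \<le> ennreal (1 / real n) * (\<Sum>i<n. \<integral>\<^sup>+\<omega>. ennreal (P i (X \<omega>) (E \<omega> i)) \<partial>PiM UNIV M)"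
    by (intro mult_left_mono sum_mono stepi) auto
  also have "(\<Sum>i<n. \<integral>\<^sup>+\<omega>. ennreal (P i (X \<omega>) (E \<omega> i)) \<partial>PiM UNIV M)
      = (\<integral>\<^sup>+\<omega>. (\<Sum>i<n. ennreal (P i (X \<omega>) (E \<omega> i))) \<partial>PiM UNIV M)"
    by (rule nn_integral_sum[symmetric]) (auto intro: borel_measurable_ennreal Pm)
  also have "\<dots> = (\<integral>\<^sup>+\<omega>. ennreal (\<Sum>i<n. P i (X \<omega>) (E \<omega> i)) \<partial>PiM UNIV M)"
    using P0 by (simp add: sum_ennreal)
  also have "ennreal (1 / real n) * \<dots> = (\<integral>\<^sup>+\<omega>. ennreal (1 / real n) * ennreal (\<Sum>i<n. P i (X \<omega>) (E \<omega> i)) \<partial>PiM UNIV M)"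
    by (rule nn_integral_cmult[symmetric]) (intro borel_measurable_ennreal borel_measurable_sum Pm, auto)
  also have "\<dots> = (\<integral>\<^sup>+\<omega>. ennreal ((1 / real n) * (\<Sum>i<n. P i (X \<omega>) (E \<omega> i))) \<partial>PiM UNIV M)"
    by (subst ennreal_mult') auto
  also have "\<dots> \<le> (\<integral>\<^sup>+\<omega>. ennreal (R \<omega>) \<partial>PiM UNIV M)"
  proof (rule nn_integral_mono)
    fix \<omega>
    show "ennreal ((1 / real n) * (\<Sum>i<n. P i (X \<omega>) (E \<omega> i))) \<le> ennreal (R \<omega>)"
      unfolding P_def R_def fb_def fs_def
      by (intro ennreal_leI pointwise[OF n_pos grad smooth convex minimizer delta alpha])
  qed
  also have "(\<integral>\<^sup>+\<omega>. ennreal (R \<omega>) \<partial>PiM UNIV M)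
     = ennreal (1 - \<delta> / 2) * ec_E n S Q g C h \<gamma> x0 t
             + ennreal (8 * L / \<delta>) * ec_F n S Q g C h \<gamma> x0 fb fs t
             + ennreal (4 * \<alpha> / \<delta>) + ennreal (\<sigma>\<^sup>2)"
  proof -
    have fbm: "(\<lambda>\<omega>. fb (X \<omega>)) \<in> borel_measurable (PiM UNIV M)"
      unfolding fb_def
      by (intro borel_measurable_times borel_measurable_sum measurable_const borel_measurable_continuous_on[OF fc] Xm) auto
    have fs_le: "fs \<le> fb x" for x using minimizer[of x] by (simp add: fb_def fs_def)
    have Am: "(\<lambda>\<omega>. ennreal ((norm (E \<omega> i))\<^sup>2)) \<in> borel_measurable (PiM UNIV M)" for i
      by (intro borel_measurable_ennreal borel_measurable_power bm_norm Em) auto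
    have Rsplit: "ennreal (R \<omega>) = ennreal (1 - \<delta> / 2) * (ennreal (1 / real n) * (\<Sum>i<n. ennreal ((norm (E \<omega> i))\<^sup>2)))
        + ennreal (8 * L / \<delta>) * ennreal (fb (X \<omega>) - fs) + ennreal (4 * \<alpha> / \<delta>) + ennreal (\<sigma>\<^sup>2)" for \<omega>
    proof -
      have h1: "0 \<le> 1 - \<delta> / 2" and h2: "0 \<le> 1 / real n" and h3: "0 \<le> (\<Sum>i<n. (norm (E \<omega> i))\<^sup>2)"
        and h4: "0 \<le> 8 * L / \<delta>" and h5: "0 \<le> fb (X \<omega>) - fs" and h6: "0 \<le> 4 * \<alpha> / \<delta>" and h7: "0 \<le> \<sigma>\<^sup>2"
        using delta L0 a0 fs_le[of "X \<omega>"] by (auto intro: sum_nonneg)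
      define a1 where "a1 = (1 - \<delta> / 2) * ((1 / real n) * (\<Sum>i<n. (norm (E \<omega> i))\<^sup>2))"
      define a2 where "a2 = (8 * L / \<delta>) * (fb (X \<omega>) - fs)"
      have n1: "0 \<le> a1" unfolding a1_def using h1 h2 h3 by (intro mult_nonneg_nonneg)
      have n2: "0 \<le> a2" unfolding a2_def using h4 h5 by (rule mult_nonneg_nonneg)
      have "ennreal (R \<omega>) = ennreal a1 + ennreal a2 + ennreal (4 * \<alpha> / \<delta>) + ennreal (\<sigma>\<^sup>2)"
        unfolding R_def a1_def[symmetric] a2_def[symmetric]
        using ennreal_plus[OF add_nonneg_nonneg[OF add_nonneg_nonneg[OF n1 n2] h6] h7]
          ennreal_plus[OF add_nonneg_nonneg[OF n1 n2] h6] ennreal_plus[OF n1 n2] by simp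
      also have "ennreal a1 = ennreal (1 - \<delta> / 2) * (ennreal (1 / real n) * (\<Sum>i<n. ennreal ((norm (E \<omega> i))\<^sup>2)))"
        unfolding a1_def ennreal_mult[OF h1 mult_nonneg_nonneg[OF h2 h3]] ennreal_mult[OF h2 h3]
        by (subst sum_ennreal) auto
      also have "ennreal a2 = ennreal (8 * L / \<delta>) * ennreal (fb (X \<omega>) - fs)"
        unfolding a2_def by (rule ennreal_mult[OF h4 h5])
      finally show ?thesis .
    qed
    have "(\<integral>\<^sup>+\<omega>. ennreal (R \<omega>) \<partial>PiM UNIV M)
      = (\<integral>\<^sup>+\<omega>. ennreal (1 - \<delta> / 2) * (ennreal (1 / real n) * (\<Sum>i<n. ennreal ((norm (E \<omega> i))\<^sup>2))) \<partial>PiM UNIV M)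
        + (\<integral>\<^sup>+\<omega>. ennreal (8 * L / \<delta>) * ennreal (fb (X \<omega>) - fs) \<partial>PiM UNIV M)
        + (\<integral>\<^sup>+\<omega>. ennreal (4 * \<alpha> / \<delta>) \<partial>PiM UNIV M) + (\<integral>\<^sup>+\<omega>. ennreal (\<sigma>\<^sup>2) \<partial>PiM UNIV M)"
    proof -
      let ?a = "\<lambda>\<omega>. ennreal (1 - \<delta> / 2) * (ennreal (1 / real n) * (\<Sum>i<n. ennreal ((norm (E \<omega> i))\<^sup>2)))"
      let ?b = "\<lambda>\<omega>. ennreal (8 * L / \<delta>) * ennreal (fb (X \<omega>) - fs)"
      have m1: "?a \<in> borel_measurable (PiM UNIV M)"
        by (intro borel_measurable_times_ennreal borel_measurable_sum measurable_const Am, auto)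
      have m2: "?b \<in> borel_measurable (PiM UNIV M)"
        by (intro borel_measurable_times_ennreal measurable_const borel_measurable_ennreal borel_measurable_diff fbm, auto)
      have m3: "(\<lambda>\<omega>. ennreal (4 * \<alpha> / \<delta>)) \<in> borel_measurable (PiM UNIV M)" by simp
      have m4: "(\<lambda>\<omega>. ennreal (\<sigma>\<^sup>2)) \<in> borel_measurable (PiM UNIV M)" by simp
      have m12: "(\<lambda>\<omega>. ?a \<omega> + ?b \<omega>) \<in> borel_measurable (PiM UNIV M)" by (rule borel_measurable_add[OF m1 m2])
      have m123: "(\<lambda>\<omega>. ?a \<omega> + ?b \<omega> + ennreal (4 * \<alpha> / \<delta>)) \<in> borel_measurable (PiM UNIV M)"
        by (rule borel_measurable_add[OF m12 m3])
      show ?thesis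
        unfolding Rsplit nn_integral_add[OF m123 m4] nn_integral_add[OF m12 m3] nn_integral_add[OF m1 m2] ..
    qed
    also have "(\<integral>\<^sup>+\<omega>. ennreal (1 - \<delta> / 2) * (ennreal (1 / real n) * (\<Sum>i<n. ennreal ((norm (E \<omega> i))\<^sup>2))) \<partial>PiM UNIV M)
        = ennreal (1 - \<delta> / 2) * ec_E n S Q g C h \<gamma> x0 t"
    proof -
      have ms: "(\<lambda>\<omega>. \<Sum>i<n. ennreal ((norm (E \<omega> i))\<^sup>2)) \<in> borel_measurable (PiM UNIV M)"
        by (intro borel_measurable_sum Am)
      have ms2: "(\<lambda>\<omega>. ennreal (1 / real n) * (\<Sum>i<n. ennreal ((norm (E \<omega> i))\<^sup>2))) \<in> borel_measurable (PiM UNIV M)"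
        by (intro borel_measurable_times_ennreal ms measurable_const, auto)
      show ?thesis
        unfolding ec_E_def Om E_def[symmetric] nn_integral_cmult[OF ms2] nn_integral_cmult[OF ms] nn_integral_sum[OF Am] ..
    qed
    also have "(\<integral>\<^sup>+\<omega>. ennreal (8 * L / \<delta>) * ennreal (fb (X \<omega>) - fs) \<partial>PiM UNIV M)
        = ennreal (8 * L / \<delta>) * ec_F n S Q g C h \<gamma> x0 fb fs t"
      unfolding ec_F_def Om X_def[symmetric]
      by (rule nn_integral_cmult) (intro borel_measurable_ennreal borel_measurable_diff fbm measurable_const, auto)
    finally show ?thesis by (simp add: Om.emeasure_space_1)
  qed
  finally show ?thesis unfolding fb_def fs_def .
qed

end
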